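(* Let $\alpha,\gamma\in(0,1)$, $f\in C^1[0,1]$ with $f(0)=0$, $D\in C^1[0,1]$ with $D>0$ on $(0,\alpha)$ and $D<0$ on $(\alpha,1)$, $g\in C^0[0,1]$ with $g<0$ on $(0,\gamma)$, $g>0$ on $(\gamma,1)$ and $g(0)=g(\gamma)=g(1)=0$. Let $\phi$ be the profile of a wavefront with speed $c$. Then the function $\mathcal V(\xi):=D(\phi(\xi))\phi'(\xi)$, defined for a.e. $\xi\in\mathbb R$, has a continuous extension to all of $\mathbb R$. Moreover $\lim_{\xi\to\xi_1^+}\mathcal V(\xi)=0$ and $\lim_{\xi\to\xi_0^-}\mathcal V(\xi)=0$, where $\xi_1:=\inf\{\xi:\phi(\xi)<1\}\in[-\infty,\infty)$ and $\xi_0:=\sup\{\xi:\phi(\xi)>0\}\in(-\infty,\infty]$.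
   Context: A traveling wave with speed $c$ and profile $\phi$ on $\mathbb R$ is a function $\phi\in C(\mathbb R)$ with values in $[0,1]$, differentiable a.e., with $D(\phi)\phi'\in L^1_{\rm loc}(\mathbb R)$, such that $\int_{\mathbb R}\big(D(\phi)\phi'-f(\phi)+c\phi\big)\psi'-g(\phi)\psi\,d\xi=0$ for all $\psi\in C_0^\infty(\mathbb R)$. A wavefront is such a traveling wave whose profile is monotone and non-constant; profiles are taken non-increasing with $\phi(-\infty)=1$, $\phi(+\infty)=0$. *)

theory Defs
  imports "HOL-Analysis.Analysis"
begin

definition C1_on :: "real \<Rightarrow> real \<Rightarrow> (real \<Rightarrow> real) \<Rightarrow> bool" where
  "C1_on a b h \<longleftrightarrow> (\<exists>h'. continuous_on {a..b} h' \<and>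
      (\<forall>x\<in>{a..b}. (h has_real_derivative h' x) (at x within {a..b})))"

definition test_function :: "(real \<Rightarrow> real) \<Rightarrow> bool" where
  "test_function \<psi> \<longleftrightarrow> (\<forall>k x. ((deriv ^^ k) \<psi>) differentiable (at x))
      \<and> bounded {x. \<psi> x \<noteq> 0}"

definition traveling_wave ::
  "(real \<Rightarrow> real) \<Rightarrow> (real \<Rightarrow> real) \<Rightarrow> (real \<Rightarrow> real) \<Rightarrow> real \<Rightarrow> (real \<Rightarrow> real) \<Rightarrow> bool" where
  "traveling_wave D f g c \<phi> \<longleftrightarrow>
     continuous_on UNIV \<phi> \<and> (\<forall>\<xi>. \<phi> \<xi> \<in> {0..1}) \<and>
     (AE \<xi> in lborel. \<phi> differentiable (at \<xi>)) \<and>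
     (\<forall>K. compact K \<longrightarrow> set_integrable lborel K (\<lambda>\<xi>. D (\<phi> \<xi>) * deriv \<phi> \<xi>)) \<and>
     (\<forall>\<psi>. test_function \<psi> \<longrightarrow>
        (LINT \<xi>|lborel. (D (\<phi> \<xi>) * deriv \<phi> \<xi> - f (\<phi> \<xi>) + c * \<phi> \<xi>) * deriv \<psi> \<xi>
                        - g (\<phi> \<xi>) * \<psi> \<xi>) = 0)"

text \<open>Wavefront: monotone non-constant traveling wave; normalized non-increasing
  with \<phi>(-\<infinity>) = 1, \<phi>(+\<infinity>) = 0.\<close>
definition wavefront ::
  "(real \<Rightarrow> real) \<Rightarrow> (real \<Rightarrow> real) \<Rightarrow> (real \<Rightarrow> real) \<Rightarrow> real \<Rightarrow> (real \<Rightarrow> real) \<Rightarrow> bool" where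
  "wavefront D f g c \<phi> \<longleftrightarrow> traveling_wave D f g c \<phi> \<and> antimono \<phi> \<and>
     (\<exists>x y. \<phi> x \<noteq> \<phi> y) \<and> (\<phi> \<longlongrightarrow> 1) at_bot \<and> (\<phi> \<longlongrightarrow> 0) at_top"

end

theory Submission
  imports Defs "HOL-Computational_Algebra.Polynomial"
begin


definition smooth :: "(real \<Rightarrow> real) \<Rightarrow> bool" where
  "smooth f \<longleftrightarrow> (\<forall>k x. (deriv ^^ k) f differentiable (at x))"

lemma rdiff_iff: "(f::real\<Rightarrow>real) differentiable (at x) \<longleftrightarrow> f field_differentiable (at x)"
  by (metis DERIV_deriv_iff_field_differentiable DERIV_deriv_iff_real_differentiable)

lemma funpow_deriv_Suc: "(deriv ^^ Suc k) f = (deriv ^^ k) (deriv f)"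
  by (simp add: funpow_Suc_right del: funpow.simps)

lemma smooth_deriv: "smooth f \<Longrightarrow> smooth (deriv f)"
  unfolding smooth_def by (metis funpow_deriv_Suc)

lemma smooth_diff: "smooth f \<Longrightarrow> f differentiable (at x)"
  unfolding smooth_def by (metis funpow_0)

lemma funpow_deriv_add:
  fixes f g :: "real \<Rightarrow> real"
  assumes "\<forall>j<k. \<forall>x. (deriv ^^ j) f differentiable (at x)"
    and "\<forall>j<k. \<forall>x. (deriv ^^ j) g differentiable (at x)"
  shows "(deriv ^^ k) (\<lambda>x. f x + g x) = (\<lambda>x. (deriv ^^ k) f x + (deriv ^^ k) g x)"
  using assms
proof (induction k arbitrary: f g)
  case 0
  then show ?case by simp
next
  case (Suc k)
  have "deriv (\<lambda>x. f x + g x) = (\<lambda>x. deriv f x + deriv g x)"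
    using Suc.prems by (intro ext deriv_add) (auto simp: rdiff_iff[symmetric])
  then have "(deriv ^^ Suc k) (\<lambda>x. f x + g x) = (deriv ^^ k) (\<lambda>x. deriv f x + deriv g x)"
    by (simp only: funpow_deriv_Suc)
  also have "\<dots> = (\<lambda>x. (deriv ^^ k) (deriv f) x + (deriv ^^ k) (deriv g) x)"
    using Suc.prems by (intro Suc.IH) (auto simp del: funpow.simps simp: funpow_deriv_Suc[symmetric])
  finally show ?case by (simp only: funpow_deriv_Suc)
qed

lemma funpow_deriv_cmult:
  fixes f :: "real \<Rightarrow> real"
  assumes "\<forall>j<k. \<forall>x. (deriv ^^ j) f differentiable (at x)"
  shows "(deriv ^^ k) (\<lambda>x. c * f x) = (\<lambda>x. c * (deriv ^^ k) f x)"
  using assms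
proof (induction k arbitrary: f)
  case 0
  then show ?case by simp
next
  case (Suc k)
  have "deriv (\<lambda>x. c * f x) = (\<lambda>x. c * deriv f x)"
    using Suc.prems by (intro ext deriv_cmult) (auto simp: rdiff_iff[symmetric])
  then have "(deriv ^^ Suc k) (\<lambda>x. c * f x) = (deriv ^^ k) (\<lambda>x. c * deriv f x)"
    by (simp only: funpow_deriv_Suc)
  also have "\<dots> = (\<lambda>x. c * (deriv ^^ k) (deriv f) x)"
    using Suc.prems by (intro Suc.IH) (auto simp del: funpow.simps simp: funpow_deriv_Suc[symmetric])
  finally show ?case by (simp only: funpow_deriv_Suc)
qed

lemma deriv_affine_comp:
  fixes f :: "real \<Rightarrow> real"
  assumes "\<And>x. f differentiable (at x)"
  shows "deriv (\<lambda>x. f (a * x + b)) = (\<lambda>x. a * deriv f (a * x + b))"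
proof
  fix x
  have "((\<lambda>x. f (a * x + b)) has_real_derivative (deriv f (a * x + b) * a)) (at x)"
    using assms
    by (intro DERIV_chain2[where f=f]) (auto simp: DERIV_deriv_iff_real_differentiable intro!: derivative_eq_intros)
  then show "deriv (\<lambda>x. f (a * x + b)) x = a * deriv f (a * x + b)"
    by (simp add: DERIV_imp_deriv mult.commute)
qed

lemma funpow_deriv_affine:
  fixes f :: "real \<Rightarrow> real"
  assumes "\<forall>j<k. \<forall>x. (deriv ^^ j) f differentiable (at x)"
  shows "(deriv ^^ k) (\<lambda>x. f (a * x + b)) = (\<lambda>x. a ^ k * (deriv ^^ k) f (a * x + b))"
  using assms
proof (induction k arbitrary: f rule: less_induct)
  case (less n)
  show ?case
  proof (cases n)
    case 0
    then show ?thesis by simp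
  next
    case (Suc k)
    note prems = less.prems[unfolded Suc]
    have "deriv (\<lambda>x. f (a * x + b)) = (\<lambda>x. a * deriv f (a * x + b))"
      using prems by (intro deriv_affine_comp) auto
    then have "(deriv ^^ Suc k) (\<lambda>x. f (a * x + b)) = (deriv ^^ k) (\<lambda>x. a * deriv f (a * x + b))"
      by (simp only: funpow_deriv_Suc)
    also have "\<dots> = (\<lambda>x. a * (deriv ^^ k) (\<lambda>x. deriv f (a * x + b)) x)"
    proof (rule funpow_deriv_cmult, intro allI impI)
      fix j x assume "j < k"
      have "(deriv ^^ j) (\<lambda>x. deriv f (a * x + b)) = (\<lambda>x. a ^ j * (deriv ^^ j) (deriv f) (a * x + b))"
        using prems \<open>j < k\<close> Suc by (intro less.IH) (auto simp del: funpow.simps simp: funpow_deriv_Suc[symmetric])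
      moreover have "(\<lambda>x. a ^ j * (deriv ^^ j) (deriv f) (a * x + b)) differentiable (at x)"
      proof -
        have "(deriv ^^ j) (deriv f) differentiable (at (a * x + b))"
          using prems \<open>j < k\<close> by (metis Suc_mono funpow_deriv_Suc)
        then show ?thesis
          by (intro derivative_intros differentiable_chain_at[unfolded o_def, where f="\<lambda>x. a*x+b"]) auto
      qed
      ultimately show "(deriv ^^ j) (\<lambda>x. deriv f (a * x + b)) differentiable (at x)" by simp
    qed
    also have "\<dots> = (\<lambda>x. a * (a ^ k * (deriv ^^ k) (deriv f) (a * x + b)))"
      using prems Suc by (subst less.IH) (auto simp del: funpow.simps simp: funpow_deriv_Suc[symmetric])
    finally show ?thesis unfolding Suc by (simp only: funpow_deriv_Suc) (simp add: mult.assoc)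
  qed
qed


lemma smooth_add: "smooth f \<Longrightarrow> smooth g \<Longrightarrow> smooth (\<lambda>x. f x + g x)"
  unfolding smooth_def by (subst funpow_deriv_add) (auto intro!: differentiable_add)

lemma smooth_cmult: "smooth f \<Longrightarrow> smooth (\<lambda>x. c * f x)"
  unfolding smooth_def
proof (intro allI)
  fix k x assume f: "\<forall>k x. (deriv ^^ k) f differentiable at x"
  have "(deriv ^^ k) (\<lambda>x. c * f x) = (\<lambda>x. c * (deriv ^^ k) f x)"
    using f by (intro funpow_deriv_cmult) blast
  moreover have "(\<lambda>x. c * (deriv ^^ k) f x) differentiable at x"
    using f by (intro differentiable_mult differentiable_const) blast
  ultimately show "(deriv ^^ k) (\<lambda>x. c * f x) differentiable at x" by simp
qed

lemma smooth_affine: "smooth f \<Longrightarrow> smooth (\<lambda>x. f (a * x + b))"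
  unfolding smooth_def
proof (intro allI)
  fix k x assume f: "\<forall>k x. (deriv ^^ k) f differentiable at x"
  have eq: "(deriv ^^ k) (\<lambda>x. f (a * x + b)) = (\<lambda>x. a ^ k * (deriv ^^ k) f (a * x + b))"
    using f by (intro funpow_deriv_affine) blast
  have l: "(\<lambda>x. a * x + b) differentiable at x" 
    by (intro differentiable_add differentiable_mult differentiable_const differentiable_ident)
  have "((deriv ^^ k) f \<circ> (\<lambda>x. a * x + b)) differentiable at x"
    using f l by (intro differentiable_chain_at) blast+
  then have "(\<lambda>x. a ^ k * (deriv ^^ k) f (a * x + b)) differentiable at x"
    by (intro differentiable_mult differentiable_const) (simp add: o_def)
  then show "(deriv ^^ k) (\<lambda>x. f (a * x + b)) differentiable at x" unfolding eq .
qed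

lemma funpow_deriv_const: "(deriv ^^ k) (\<lambda>x. c) = (if k = 0 then (\<lambda>x. c) else (\<lambda>x. 0))"
  by (induction k) auto

lemma smooth_const: "smooth (\<lambda>x. c)"
  unfolding smooth_def by (simp add: funpow_deriv_const)

lemma smooth_mult_aux:
  "\<forall>f g. smooth f \<longrightarrow> smooth g \<longrightarrow> (\<forall>x. (deriv ^^ k) (\<lambda>x. f x * g x) differentiable (at x))"
proof (induction k rule: less_induct)
  case (less n)
  show ?case
  proof (cases n)
    case 0
    have "(\<lambda>x. f x * g x) differentiable (at x)" if "smooth f" "smooth g" for f g :: "real \<Rightarrow> real" and x
      using that by (intro differentiable_mult smooth_diff)
    then show ?thesis using 0 by simp
  next
    case (Suc m)
    show ?thesis
    proof (intro allI impI)
      fix f g x assume f: "smooth f" and g: "smooth g"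
      have IH: "\<And>j f g x. j < n \<Longrightarrow> smooth f \<Longrightarrow> smooth g \<Longrightarrow> (deriv ^^ j) (\<lambda>x. f x * g x) differentiable (at x)"
        using less.IH by blast
      have "deriv (\<lambda>x. f x * g x) = (\<lambda>x. f x * deriv g x + deriv f x * g x)"
        using f g by (intro ext deriv_mult) (auto simp: rdiff_iff[symmetric] smooth_diff)
      then have "(deriv ^^ n) (\<lambda>x. f x * g x) = (deriv ^^ m) (\<lambda>x. f x * deriv g x + deriv f x * g x)"
        unfolding Suc by (simp only: funpow_deriv_Suc)
      also have "\<dots> = (\<lambda>x. (deriv ^^ m) (\<lambda>x. f x * deriv g x) x + (deriv ^^ m) (\<lambda>x. deriv f x * g x) x)"
        using f g Suc by (intro funpow_deriv_add allI impI IH) (simp_all add: smooth_deriv)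
      finally have eq: "(deriv ^^ n) (\<lambda>x. f x * g x) = (\<lambda>x. (deriv ^^ m) (\<lambda>x. f x * deriv g x) x + (deriv ^^ m) (\<lambda>x. deriv f x * g x) x)" .
      have "(\<lambda>x. (deriv ^^ m) (\<lambda>x. f x * deriv g x) x + (deriv ^^ m) (\<lambda>x. deriv f x * g x) x) differentiable (at x)"
        by (intro differentiable_add IH) (simp_all add: Suc f g smooth_deriv)
      then show "(deriv ^^ n) (\<lambda>x. f x * g x) differentiable (at x)"
        unfolding eq .
    qed
  qed
qed

lemma smooth_mult: "smooth f \<Longrightarrow> smooth g \<Longrightarrow> smooth (\<lambda>x. f x * g x)"
  using smooth_mult_aux unfolding smooth_def by blast

lemma smooth_funpow_deriv: "smooth f \<Longrightarrow> smooth ((deriv ^^ k) f)"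
  unfolding smooth_def by (metis comp_apply funpow_add)

definition hp :: "real poly \<Rightarrow> real \<Rightarrow> real" where
  "hp p x = (if x > 0 then poly p (1 / x) * exp (- 1 / x) else 0)"

definition hq :: "real poly \<Rightarrow> real poly" where
  "hq p = [:0, 0, 1:] * (p - pderiv p)"

lemma poly_exp_tendsto: fixes p :: "real poly" shows "((\<lambda>t. poly p t * exp (- t)) \<longlongrightarrow> 0) at_top"
proof -
  have "((\<lambda>t. \<Sum>i\<le>degree p. coeff p i * (t ^ i / exp t)) \<longlongrightarrow> (\<Sum>i\<le>degree p. coeff p i * 0)) at_top"
    by (intro tendsto_sum tendsto_mult tendsto_const tendsto_power_div_exp_0)
  moreover have "poly p t * exp (- t) = (\<Sum>i\<le>degree p. coeff p i * (t ^ i / exp t))" for t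
    by (simp add: poly_altdef exp_minus divide_inverse sum_distrib_right mult.assoc)
  ultimately show ?thesis by simp
qed

lemma hp_deriv: "(hp p has_real_derivative hp (hq p) x) (at x)"
proof (cases "x > 0")
  case True
  have "((\<lambda>x. poly p (1 / x) * exp (- 1 / x)) has_real_derivative
     poly (pderiv p) (1 / x) * (- 1 / x^2) * exp (- 1 / x) + poly p (1 / x) * (exp (- 1 / x) * (1 / x^2))) (at x)"
    using True
    by (auto intro!: derivative_eq_intros DERIV_chain2[OF poly_DERIV] simp: power2_eq_square)
  moreover have "poly (pderiv p) (1 / x) * (- 1 / x^2) * exp (- 1 / x) + poly p (1 / x) * (exp (- 1 / x) * (1 / x^2))
      = hp (hq p) x"
    using True by (simp add: hp_def hq_def algebra_simps power2_eq_square)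
  ultimately have "((\<lambda>x. poly p (1 / x) * exp (- 1 / x)) has_real_derivative hp (hq p) x) (at x)" by simp
  then show ?thesis
    by (rule has_field_derivative_transform_within_open[where S="{0<..}"]) (use True in \<open>auto simp: hp_def\<close>)
next
  case False
  show ?thesis
  proof (cases "x < 0")
    case True
    have "((\<lambda>x. 0) has_real_derivative 0) (at x)" by simp
    then have "((\<lambda>x. 0) has_real_derivative hp (hq p) x) (at x)" using True by (simp add: hp_def)
    then show ?thesis
      by (rule has_field_derivative_transform_within_open[where S="{..<0}"]) (use True in \<open>auto simp: hp_def\<close>)
  next
    case False
    with \<open>\<not> x > 0\<close> have x: "x = 0" by simp
    have "((\<lambda>h. (hp p (0 + h) - hp p 0) / h) \<longlongrightarrow> 0) (at 0)"
    proof (rule filterlim_split_at)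
      show "((\<lambda>h. (hp p (0 + h) - hp p 0) / h) \<longlongrightarrow> 0) (at_left 0)"
        by (rule tendsto_eventually) (auto simp: hp_def eventually_at_left_field intro: exI[of _ "-1"])
      have "((\<lambda>t. poly (pCons 0 p) t * exp (- t)) \<longlongrightarrow> 0) at_top"
        by (rule poly_exp_tendsto)
      then have "((\<lambda>h. poly (pCons 0 p) (inverse h) * exp (- inverse h)) \<longlongrightarrow> 0) (at_right 0)"
        by (rule filterlim_compose) (rule filterlim_inverse_at_top_right)
      then show "((\<lambda>h. (hp p (0 + h) - hp p 0) / h) \<longlongrightarrow> 0) (at_right 0)"
        by (rule Lim_transform_eventually)
          (auto simp: hp_def eventually_at_right_field field_simps intro!: exI[of _ 1])
    qed
    then have "(hp p has_real_derivative 0) (at 0)"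
      by (simp add: DERIV_def)
    then show ?thesis using x by (simp add: hp_def)
  qed
qed

lemma deriv_hp: "deriv (hp p) = hp (hq p)"
  using hp_deriv by (intro ext DERIV_imp_deriv)

lemma funpow_deriv_hp: "(deriv ^^ k) (hp p) = hp ((hq ^^ k) p)"
  by (induction k arbitrary: p) (auto simp del: funpow.simps simp: funpow_deriv_Suc deriv_hp funpow_Suc_right)

lemma smooth_hp: "smooth (hp p)"
  unfolding smooth_def funpow_deriv_hp using hp_deriv real_differentiable_def by blast


definition prim :: "(real \<Rightarrow> real) \<Rightarrow> real \<Rightarrow> real" where
  "prim k x = integral {0..x} k - integral {x..0} k"

lemma prim_local:
  assumes k: "continuous_on UNIV k" and y: "y \<in> {-r..r}"
  shows "prim k y = integral {-r..y} k - integral {-r..0} k"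
proof (cases "y \<ge> 0")
  case True
  have "integral {-r..0} k + integral {0..y} k = integral {-r..y} k"
    using True y by (intro Henstock_Kurzweil_Integration.integral_combine integrable_continuous_interval continuous_on_subset[OF k]) auto
  moreover have "integral {y..0} k = 0"
    using True by (cases "y = 0") auto
  ultimately show ?thesis unfolding prim_def by simp
next
  case False
  have "integral {-r..y} k + integral {y..0} k = integral {-r..0} k"
    using False y by (intro Henstock_Kurzweil_Integration.integral_combine integrable_continuous_interval continuous_on_subset[OF k]) auto
  moreover have "integral {0..y} k = 0"
    using False by auto
  ultimately show ?thesis unfolding prim_def by simp
qed

lemma prim_deriv:
  assumes k: "continuous_on UNIV k"
  shows "(prim k has_real_derivative k x) (at x)"
proof -
  define r where "r = \<bar>x\<bar> + 1"
  have "((\<lambda>y. integral {-r..y} k) has_real_derivative k x) (at x within {-r..r})"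
    by (rule integral_has_real_derivative) (auto intro: continuous_on_subset[OF k] simp: r_def)
  from DERIV_diff[OF this DERIV_const]
  have "((\<lambda>y. integral {-r..y} k - integral {-r..0} k) has_real_derivative k x) (at x within {-r..r})"
    by simp
  then have "((\<lambda>y. integral {-r..y} k - integral {-r..0} k) has_real_derivative k x) (at x)"
    by (subst (asm) at_within_interior) (auto simp: r_def)
  moreover have "open {-r<..<r}" by simp
  moreover have "x \<in> {-r<..<r}" by (auto simp: r_def)
  moreover have "\<And>y. y \<in> {-r<..<r} \<Longrightarrow> integral {-r..y} k - integral {-r..0} k = prim k y"
  proof -
    fix y assume "y \<in> {-r<..<r}"
    then have "y \<in> {-r..r}" by auto
    from prim_local[OF k this] show "integral {-r..y} k - integral {-r..0} k = prim k y" by simp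
  qed
  ultimately show ?thesis
    by (rule has_field_derivative_transform_within_open)
qed

lemma deriv_prim: "continuous_on UNIV k \<Longrightarrow> deriv (prim k) = k"
  by (intro ext DERIV_imp_deriv prim_deriv)

lemma prim_has_integral:
  assumes k: "continuous_on UNIV k" and "a \<le> b"
  shows "(k has_integral (prim k b - prim k a)) {a..b}"
  using assms(2) by (intro fundamental_theorem_of_calculus)
    (auto intro: has_field_derivative_at_within prim_deriv[OF k] simp: has_real_derivative_iff_has_vector_derivative[symmetric])

lemma continuous_prim: "continuous_on UNIV k \<Longrightarrow> continuous_on UNIV (prim k)"
  by (meson DERIV_isCont continuous_at_imp_continuous_on prim_deriv)

definition e0 :: "real \<Rightarrow> real" where "e0 = hp 1"

lemma e0_simp: "e0 x = (if x > 0 then exp (- 1 / x) else 0)"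
  by (simp add: e0_def hp_def)

definition bmp :: "real \<Rightarrow> real" where "bmp x = e0 x * e0 (1 - x)"

lemma smooth_bmp: "smooth bmp"
proof -
  have "smooth (\<lambda>x. e0 x * e0 ((-1) * x + 1))"
    by (intro smooth_mult smooth_affine) (auto simp: e0_def smooth_hp)
  then show ?thesis unfolding bmp_def by simp
qed

lemma continuous_bmp: "continuous_on UNIV bmp"
  by (meson continuous_at_imp_continuous_on differentiable_imp_continuous_within smooth_bmp smooth_diff)

lemma bmp_nonneg: "bmp x \<ge> 0"
  by (simp add: bmp_def e0_simp)

lemma bmp_zero: "x \<le> 0 \<or> x \<ge> 1 \<Longrightarrow> bmp x = 0"
  by (auto simp: bmp_def e0_simp)

lemma bmp_pos: "0 < x \<Longrightarrow> x < 1 \<Longrightarrow> bmp x > 0"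
  by (simp add: bmp_def e0_simp)

definition beta :: real where "beta = integral {0..1} bmp"

lemma beta_pos: "beta > 0"
proof -
  have "beta \<ge> 0" unfolding beta_def by (intro integral_nonneg integrable_continuous_interval continuous_on_subset[OF continuous_bmp]) (auto simp: bmp_nonneg)
  moreover have "beta \<noteq> 0"
  proof
    assume "beta = 0"
    then have "(bmp has_integral 0) (cbox 0 1)"
      unfolding beta_def
      by (metis box_real(2) has_integral_integral integrable_continuous_interval continuous_on_subset[OF continuous_bmp] subset_UNIV)
    then have "bmp (1/2) = 0"
      by (intro has_integral_0_cbox_imp_0[of 0 1 bmp]) (auto intro: continuous_on_subset[OF continuous_bmp] bmp_nonneg)
    then show False using bmp_pos[of "1/2"] by simp
  qed
  ultimately show ?thesis by simp
qed

definition Sf :: "real \<Rightarrow> real" where "Sf = prim (\<lambda>x. bmp x / beta)"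

lemma cont_bmpb: "continuous_on UNIV (\<lambda>x. bmp x / beta)"
  by (intro continuous_intros continuous_bmp) (use beta_pos in auto)

lemma Sf_deriv: "(Sf has_real_derivative bmp x / beta) (at x)"
  unfolding Sf_def using prim_deriv[OF cont_bmpb] .

lemma deriv_Sf: "deriv Sf = (\<lambda>x. bmp x / beta)"
  unfolding Sf_def by (rule deriv_prim[OF cont_bmpb])

lemma smooth_Sf: "smooth Sf"
  unfolding smooth_def
proof (intro allI)
  fix k x
  show "(deriv ^^ k) Sf differentiable at x"
  proof (cases k)
    case 0
    then show ?thesis using Sf_deriv real_differentiable_def by auto
  next
    case (Suc j)
    have "smooth (\<lambda>x. (1/beta) * bmp x)" by (intro smooth_cmult smooth_bmp)
    then show ?thesis unfolding Suc funpow_deriv_Suc deriv_Sf smooth_def by simp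
  qed
qed

lemma Sf_zero: "x \<le> 0 \<Longrightarrow> Sf x = 0"
proof -
  assume x: "x \<le> 0"
  have a: "integral {x..0} (\<lambda>x. bmp x / beta) = 0"
    by (rule trans[OF integral_cong integral_0]) (auto simp: bmp_zero)
  have b: "integral {0..x} (\<lambda>x. bmp x / beta) = 0"
    by (rule trans[OF integral_cong integral_0]) (use x in \<open>auto simp: bmp_zero\<close>)
  show ?thesis unfolding Sf_def prim_def by (simp only: a b diff_zero)
qed

lemma Sf_one: "x \<ge> 1 \<Longrightarrow> Sf x = 1"
proof -
  assume x: "x \<ge> 1"
  have "integral {0..1} (\<lambda>x. bmp x / beta) + integral {1..x} (\<lambda>x. bmp x / beta) = integral {0..x} (\<lambda>x. bmp x / beta)"
    using x by (intro Henstock_Kurzweil_Integration.integral_combine integrable_continuous_interval continuous_on_subset[OF cont_bmpb]) auto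
  moreover have "integral {1..x} (\<lambda>x. bmp x / beta) = 0"
    by (rule trans[OF integral_cong integral_0]) (auto simp: bmp_zero)
  moreover have "integral {0..1} (\<lambda>x. bmp x / beta) = 1"
    using beta_pos by (simp add: beta_def)
  moreover have "integral {x..0} (\<lambda>x. bmp x / beta) = 0" using x by simp
  ultimately have "integral {0..x} (\<lambda>x. bmp x / beta) = 1" "integral {x..0} (\<lambda>x. bmp x / beta) = 0" by simp_all
  then show ?thesis unfolding Sf_def prim_def by (simp only: diff_zero)
qed

lemma Sf_mono: "x \<le> y \<Longrightarrow> Sf x \<le> Sf y"
  by (rule DERIV_nonneg_imp_nondecreasing[of x y]) (auto intro!: exI Sf_deriv simp: bmp_nonneg beta_pos less_imp_le)

lemma Sf_bounds: "0 \<le> Sf x" "Sf x \<le> 1"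
proof -
  show "0 \<le> Sf x"
    by (cases "x \<le> 0") (auto simp: Sf_zero intro: order_trans[OF _ Sf_mono, of _ 0] simp: Sf_zero[of 0])
  show "Sf x \<le> 1"
    by (cases "x \<ge> 1") (auto simp: Sf_one intro: order_trans[OF Sf_mono, of _ 1] simp: Sf_one[of 1])
qed

lemma continuous_Sf: "continuous_on UNIV Sf"
  by (meson DERIV_isCont Sf_deriv continuous_at_imp_continuous_on)

definition Qf :: "real \<Rightarrow> real" where "Qf = prim Sf"

definition kap :: real where "kap = 1 - integral {0..1} Sf"

lemma Qf_deriv: "(Qf has_real_derivative Sf x) (at x)"
  unfolding Qf_def using prim_deriv[OF continuous_Sf] .

lemma deriv_Qf: "deriv Qf = Sf"
  unfolding Qf_def by (rule deriv_prim[OF continuous_Sf])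

lemma smooth_Qf: "smooth Qf"
  unfolding smooth_def
proof (intro allI)
  fix k x
  show "(deriv ^^ k) Qf differentiable at x"
  proof (cases k)
    case 0
    then show ?thesis using Qf_deriv real_differentiable_def by auto
  next
    case (Suc j)
    then show ?thesis using smooth_Sf unfolding Suc funpow_deriv_Suc deriv_Qf smooth_def by simp
  qed
qed

lemma Qf_zero: "x \<le> 0 \<Longrightarrow> Qf x = 0"
proof -
  assume x: "x \<le> 0"
  have "integral {x..0} Sf = integral {x..0} (\<lambda>x. 0)"
    by (intro integral_cong) (auto simp: Sf_zero)
  moreover have "integral {0..x} Sf = integral {0..x} (\<lambda>x. 0)"
    using x by (intro integral_cong) (auto simp: Sf_zero)
  ultimately show ?thesis by (simp add: Qf_def prim_def)
qed

lemma Qf_lin: "x \<ge> 1 \<Longrightarrow> Qf x = x - kap"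
proof -
  assume x: "x \<ge> 1"
  have "integral {0..1} Sf + integral {1..x} Sf = integral {0..x} Sf"
    using x by (intro Henstock_Kurzweil_Integration.integral_combine integrable_continuous_interval continuous_on_subset[OF continuous_Sf]) auto
  moreover have "integral {1..x} Sf = integral {1..x} (\<lambda>x. 1)"
    by (intro integral_cong) (auto simp: Sf_one)
  moreover have "integral {x..0} Sf = 0" using x by simp
  ultimately show ?thesis using x by (simp add: Qf_def prim_def kap_def)
qed


lemma smooth_shift: "smooth f \<Longrightarrow> smooth (\<lambda>x. f ((x - a) / e))"
proof -
  assume "smooth f"
  from smooth_affine[OF this, of "1/e" "-a/e"]
  show ?thesis by (simp add: diff_divide_distrib)
qed

lemma smooth_deriv_cont: "smooth f \<Longrightarrow> continuous_on UNIV (deriv f)"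
proof -
  assume "smooth f"
  then have "deriv f differentiable at x" for x
    unfolding smooth_def by (metis funpow_0 funpow_deriv_Suc)
  then show ?thesis
    by (meson continuous_at_imp_continuous_on differentiable_imp_continuous_within)
qed

lemma smooth_cont: "smooth f \<Longrightarrow> continuous_on UNIV f"
  by (meson continuous_at_imp_continuous_on differentiable_imp_continuous_within smooth_diff)

lemma smooth_test_function:
  assumes "smooth \<psi>" "\<And>x. R \<le> \<bar>x\<bar> \<Longrightarrow> \<psi> x = 0"
  shows "test_function \<psi>"
proof -
  have "{x. \<psi> x \<noteq> 0} \<subseteq> cball 0 R"
    using assms(2) by (force simp: dist_norm)
  then have "bounded {x. \<psi> x \<noteq> 0}"
    using bounded_cball bounded_subset by blast
  then show ?thesis using assms(1) unfolding test_function_def smooth_def by blast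
qed

definition tf :: "real \<Rightarrow> real \<Rightarrow> real \<Rightarrow> real \<Rightarrow> real" where
  "tf e s L x = e * (Qf ((x - s) / e) - Qf ((x - (s + L)) / e) - L * Qf ((x - 0) / e) + L * Qf ((x - 1) / e))"

definition dtf :: "real \<Rightarrow> real \<Rightarrow> real \<Rightarrow> real \<Rightarrow> real" where
  "dtf e s L x = Sf ((x - s) / e) - Sf ((x - (s + L)) / e) - L * Sf ((x - 0) / e) + L * Sf ((x - 1) / e)"

lemma Qf_shift_deriv:
  assumes "e > 0"
  shows "((\<lambda>x. Qf ((x - a) / e)) has_real_derivative Sf ((x - a) / e) / e) (at x)"
proof -
  have "((\<lambda>x. (x - a) / e) has_real_derivative 1 / e) (at x)"
    using assms by (auto intro!: derivative_eq_intros)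
  from DERIV_chain2[OF Qf_deriv this] show ?thesis using assms by simp
qed

lemma tf_deriv:
  assumes "e > 0"
  shows "(tf e s L has_real_derivative dtf e s L x) (at x)"
proof -
  have "((\<lambda>x. e * (Qf ((x - s) / e) - Qf ((x - (s + L)) / e) - L * Qf ((x - 0) / e) + L * Qf ((x - 1) / e)))
    has_real_derivative e * (Sf ((x - s) / e) / e - Sf ((x - (s + L)) / e) / e - L * (Sf ((x - 0) / e) / e) + L * (Sf ((x - 1) / e) / e))) (at x)"
    by (intro DERIV_cmult DERIV_add DERIV_diff Qf_shift_deriv assms)
  moreover have "e * (Sf ((x - s) / e) / e - Sf ((x - (s + L)) / e) / e - L * (Sf ((x - 0) / e) / e) + L * (Sf ((x - 1) / e) / e))
     = dtf e s L x"
    using assms by (simp add: dtf_def field_simps)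
  ultimately show ?thesis unfolding tf_def[abs_def] by simp
qed

lemma deriv_tf: "e > 0 \<Longrightarrow> deriv (tf e s L) = dtf e s L"
  using tf_deriv by (intro ext DERIV_imp_deriv) auto

lemma smooth_tf: "smooth (tf e s L)"
proof -
  have "smooth (\<lambda>x. e * (Qf ((x - s) / e) + (-1) * Qf ((x - (s + L)) / e) + (- L) * Qf ((x - 0) / e) + L * Qf ((x - 1) / e)))"
    by (intro smooth_cmult smooth_add smooth_shift smooth_Qf)
  then show ?thesis unfolding tf_def[abs_def] by simp
qed

definition tR :: "real \<Rightarrow> real \<Rightarrow> real \<Rightarrow> real" where
  "tR e s L = \<bar>s\<bar> + \<bar>L\<bar> + 2 + e"

lemma tf_zero:
  assumes "e > 0" "tR e s L \<le> \<bar>x\<bar>"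
  shows "tf e s L x = 0"
proof (cases "x < 0")
  case True
  then have "x \<le> - tR e s L" using assms by simp
  then have "(x - s) / e \<le> 0" "(x - (s + L)) / e \<le> 0" "(x - 0) / e \<le> 0" "(x - 1) / e \<le> 0"
    using assms(1) by (auto simp: tR_def divide_nonpos_pos)
  then show ?thesis by (simp add: tf_def Qf_zero)
next
  case False
  then have "x \<ge> tR e s L" using assms by simp
  then have "(x - s) / e \<ge> 1" "(x - (s + L)) / e \<ge> 1" "(x - 0) / e \<ge> 1" "(x - 1) / e \<ge> 1"
    using assms(1) by (auto simp: tR_def le_divide_eq)
  then have "tf e s L x = e * (((x - s) / e - kap) - ((x - (s + L)) / e - kap) - L * ((x - 0) / e - kap) + L * ((x - 1) / e - kap))"
    by (simp add: tf_def Qf_lin)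
  also have "\<dots> = 0" using assms(1) by (simp add: field_simps)
  finally show ?thesis .
qed

lemma test_function_tf: "e > 0 \<Longrightarrow> test_function (tf e s L)"
  by (rule smooth_test_function[OF smooth_tf]) (rule tf_zero)

lemma dtf_bound: "\<bar>dtf e s L x\<bar> \<le> 2 + 2 * \<bar>L\<bar>"
proof -
  have "\<bar>Sf y\<bar> \<le> 1" for y using Sf_bounds[of y] by simp
  then have "\<bar>Sf ((x - s) / e)\<bar> \<le> 1" "\<bar>Sf ((x - (s + L)) / e)\<bar> \<le> 1" "\<bar>L * Sf ((x - 0) / e)\<bar> \<le> \<bar>L\<bar>" "\<bar>L * Sf ((x - 1) / e)\<bar> \<le> \<bar>L\<bar>"
    by (auto simp: abs_mult intro: mult_left_le)
  then show ?thesis unfolding dtf_def by linarith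
qed

lemma Sf_lim:
  "(\<lambda>n. Sf ((x - a) / (1 / (real n + 1)))) \<longlonglongrightarrow> (if x > a then 1 else 0)"
proof (cases "x > a")
  case True
  obtain N :: nat where N: "real N > 1 / (x - a)" using reals_Archimedean2 by blast
  have "\<forall>n\<ge>N. Sf ((x - a) / (1 / (real n + 1))) = 1"
  proof (intro allI impI)
    fix n assume "N \<le> n"
    then have "1 / (x - a) < real n + 1" using N by linarith
    then have "1 \<le> (x - a) * (real n + 1)" using True by (simp add: divide_less_eq mult.commute)
    then show "Sf ((x - a) / (1 / (real n + 1))) = 1" by (intro Sf_one) simp
  qed
  then have ev: "eventually (\<lambda>n. Sf ((x - a) / (1 / (real n + 1))) = 1) sequentially"
    by (auto simp: eventually_sequentially)
  show ?thesis using True tendsto_eventually[OF ev] by simp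
next
  case False
  then have "Sf ((x - a) / (1 / (real n + 1))) = 0" for n
    by (intro Sf_zero) (simp add: mult_nonpos_nonneg)
  then show ?thesis using False by simp
qed

lemma dtf_lim:
  "(\<lambda>n. dtf (1 / (real n + 1)) s L x) \<longlonglongrightarrow>
     (if x > s then 1 else 0) - (if x > s + L then 1 else 0) - L * (if x > 0 then 1 else 0) + L * (if x > 1 then 1 else 0)"
  unfolding dtf_def
  by (intro tendsto_add tendsto_diff tendsto_mult tendsto_const Sf_lim)


lemma set_integrable_mult_cont:
  fixes h u :: "real \<Rightarrow> real"
  assumes h: "set_integrable lborel K h" and K: "compact K" and u: "continuous_on K u"
  shows "set_integrable lborel K (\<lambda>x. h x * u x)"
proof -
  obtain B where B: "\<forall>x\<in>K. \<bar>u x\<bar> \<le> B"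
    using compact_imp_bounded[OF compact_continuous_image[OF u K]] unfolding bounded_iff by auto
  define B' where "B' = max B 0"
  have B': "\<forall>x\<in>K. \<bar>u x\<bar> \<le> B'" "B' \<ge> 0" using B by (auto simp: B'_def)
  show ?thesis
  proof (rule set_integrable_bound[where f="\<lambda>x. B' * h x"])
    show "set_integrable lborel K (\<lambda>x. B' * h x)" using h by auto
    have m1: "(\<lambda>x. indicator K x *\<^sub>R h x) \<in> borel_measurable lborel"
      using h unfolding set_integrable_def by (rule borel_measurable_integrable)
    have "K \<in> sets borel" using K by (simp add: compact_imp_closed)
    then have m2: "(\<lambda>x. indicator K x *\<^sub>R u x) \<in> borel_measurable lborel"
      using borel_measurable_continuous_on_indicator[OF _ u] by simp
    have "(\<lambda>x. (indicator K x *\<^sub>R h x) * (indicator K x *\<^sub>R u x)) \<in> borel_measurable lborel"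
      using m1 m2 by measurable
    moreover have "(\<lambda>x. (indicator K x *\<^sub>R h x) * (indicator K x *\<^sub>R u x)) = (\<lambda>x. indicator K x *\<^sub>R (h x * u x))"
      by (auto simp: indicator_def)
    ultimately show "set_borel_measurable lborel K (\<lambda>x. h x * u x)"
      unfolding set_borel_measurable_def by simp
    show "AE x in lborel. x \<in> K \<longrightarrow> norm (h x * u x) \<le> norm (B' * h x)"
    proof (intro AE_I2 impI)
      fix x assume "x \<in> K"
      then have "\<bar>h x\<bar> * \<bar>u x\<bar> \<le> \<bar>h x\<bar> * B'" using B' by (intro mult_left_mono) auto
      then show "norm (h x * u x) \<le> norm (B' * h x)" using B' by (simp add: abs_mult mult.commute)
    qed
  qed
qed

locale wsetting =
  fixes D f g :: "real \<Rightarrow> real" and c :: real and \<phi> :: "real \<Rightarrow> real"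
  assumes fc: "continuous_on {0..1} f" and Dc: "continuous_on {0..1} D" and gc: "continuous_on {0..1} g"
    and tw: "traveling_wave D f g c \<phi>"
begin

lemma phic: "continuous_on UNIV \<phi>" and phir: "\<phi> x \<in> {0..1}"
  using tw unfolding traveling_wave_def by auto

lemma phi_image: "\<phi> ` S \<subseteq> {0..1}" using phir by auto

definition V where "V x = D (\<phi> x) * deriv \<phi> x"
definition gp where "gp x = g (\<phi> x)"
definition P0 where "P0 x = f (\<phi> x) - c * \<phi> x"
definition G where "G = prim gp"
definition H where "H x = V x - P0 x + G x"

lemma Vint: "compact K \<Longrightarrow> set_integrable lborel K V"
  using tw unfolding traveling_wave_def V_def[abs_def] by auto

lemma weak_raw: "test_function \<psi> \<Longrightarrow>
   (LINT \<xi>|lborel. (D (\<phi> \<xi>) * deriv \<phi> \<xi> - f (\<phi> \<xi>) + c * \<phi> \<xi>) * deriv \<psi> \<xi> - g (\<phi> \<xi>) * \<psi> \<xi>) = 0"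
  using tw unfolding traveling_wave_def by auto

lemma gp_cont: "continuous_on UNIV gp"
  unfolding gp_def[abs_def] by (rule continuous_on_compose2[OF gc phic phi_image])

lemma fphi_cont: "continuous_on UNIV (\<lambda>x. f (\<phi> x))"
  by (rule continuous_on_compose2[OF fc phic phi_image])

lemma P0_cont: "continuous_on UNIV P0"
  unfolding P0_def[abs_def] by (intro continuous_intros fphi_cont phic)

lemma G_deriv: "(G has_real_derivative gp x) (at x)"
  unfolding G_def by (rule prim_deriv[OF gp_cont])

lemma G_cont: "continuous_on UNIV G"
  unfolding G_def by (rule continuous_prim[OF gp_cont])

lemma cont_set_integrable: "continuous_on UNIV h \<Longrightarrow> set_integrable lborel {a..b} (h :: real \<Rightarrow> real)"
  unfolding set_integrable_def
  by (rule borel_integrable_compact) (auto intro: continuous_on_subset)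

lemma Hint: "set_integrable lborel {a..b} H"
proof -
  have "set_integrable lborel {a..b} (\<lambda>x. V x - P0 x + G x)"
    by (intro set_integral_add set_integral_diff Vint cont_set_integrable P0_cont G_cont) auto
  then show ?thesis unfolding H_def[abs_def] .
qed

lemma weak_H:
  assumes sm: "smooth \<psi>" and z: "\<And>x. R \<le> \<bar>x\<bar> \<Longrightarrow> \<psi> x = 0" and R: "0 \<le> R"
  shows "(LINT x:{-R..R}|lborel. H x * deriv \<psi> x) = 0"
proof -
  define K where "K = {-R..R}"
  have tfpsi: "test_function \<psi>" by (rule smooth_test_function[OF sm z])
  have d0: "deriv \<psi> x = 0" if "R < \<bar>x\<bar>" for x
  proof -
    have "open {y. R < \<bar>y\<bar>}" by (auto intro!: open_Collect_less continuous_intros)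
    then have "(\<psi> has_real_derivative 0) (at x)"
      by (rule has_field_derivative_transform_within_open[OF DERIV_const]) (use that z in auto)
    then show ?thesis by (rule DERIV_imp_deriv)
  qed
  have psic: "continuous_on UNIV \<psi>" by (rule smooth_cont[OF sm])
  have dpsic: "continuous_on UNIV (deriv \<psi>)" by (rule smooth_deriv_cont[OF sm])
  have Feq: "(V x - f (\<phi> x) + c * \<phi> x) * deriv \<psi> x - g (\<phi> x) * \<psi> x
      = indicator K x *\<^sub>R (V x * deriv \<psi> x - P0 x * deriv \<psi> x - gp x * \<psi> x)" for x
  proof (cases "x \<in> K")
    case True
    then show ?thesis by (simp add: P0_def gp_def algebra_simps)
  next
    case False
    then have "R < \<bar>x\<bar>" by (auto simp: K_def)
    then show ?thesis using False d0 z by simp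
  qed
  have "0 = (LINT x|lborel. indicator K x *\<^sub>R (V x * deriv \<psi> x - P0 x * deriv \<psi> x - gp x * \<psi> x))"
    using weak_raw[OF tfpsi] unfolding V_def[symmetric] Feq by simp
  also have "\<dots> = (LINT x:K|lborel. V x * deriv \<psi> x - P0 x * deriv \<psi> x - gp x * \<psi> x)"
    by (simp add: set_lebesgue_integral_def)
  finally have w0: "(LINT x:K|lborel. V x * deriv \<psi> x - P0 x * deriv \<psi> x - gp x * \<psi> x) = 0" by simp
  have cK: "compact K" by (simp add: K_def)
  have i1: "set_integrable lborel K (\<lambda>x. V x * deriv \<psi> x)"
    by (rule set_integrable_mult_cont[OF Vint[OF cK] cK continuous_on_subset[OF dpsic]]) simp
  have i2: "set_integrable lborel K (\<lambda>x. P0 x * deriv \<psi> x)"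
    unfolding K_def by (intro cont_set_integrable continuous_intros P0_cont dpsic)
  have i3: "set_integrable lborel K (\<lambda>x. gp x * \<psi> x)"
    unfolding K_def by (intro cont_set_integrable continuous_intros gp_cont psic)
  have i4: "set_integrable lborel K (\<lambda>x. G x * deriv \<psi> x)"
    unfolding K_def by (intro cont_set_integrable continuous_intros G_cont dpsic)
  have w1: "(LINT x:K|lborel. V x * deriv \<psi> x) - (LINT x:K|lborel. P0 x * deriv \<psi> x) - (LINT x:K|lborel. gp x * \<psi> x) = 0"
    using w0 i1 i2 i3 by (simp add: set_integral_diff set_integral_diff(1)[OF i1 i2])
  have ibp: "(LINT x:K|lborel. gp x * \<psi> x) + (LINT x:K|lborel. G x * deriv \<psi> x) = 0"
  proof -
    have i5: "set_integrable lborel K (\<lambda>x. gp x * \<psi> x + G x * deriv \<psi> x)"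
      unfolding K_def by (intro cont_set_integrable continuous_intros gp_cont psic G_cont dpsic)
    have "(LINT x:K|lborel. gp x * \<psi> x) + (LINT x:K|lborel. G x * deriv \<psi> x)
        = (LINT x:K|lborel. gp x * \<psi> x + G x * deriv \<psi> x)"
      using i3 i4 by (simp add: set_integral_add)
    also have "\<dots> = integral K (\<lambda>x. gp x * \<psi> x + G x * deriv \<psi> x)"
      by (rule set_borel_integral_eq_integral(2)[OF i5])
    also have "\<dots> = G R * \<psi> R - G (-R) * \<psi> (-R)"
    proof -
      have "((\<lambda>x. gp x * \<psi> x + G x * deriv \<psi> x) has_integral (G R * \<psi> R - G (-R) * \<psi> (-R))) {-R..R}"
      proof (rule fundamental_theorem_of_calculus)
        show "- R \<le> R" using R by simp
        fix x assume "x \<in> {-R..R}"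
        have dpsi: "(\<psi> has_real_derivative deriv \<psi> x) (at x)"
          using sm smooth_diff DERIV_deriv_iff_real_differentiable by blast
        have "((\<lambda>x. G x * \<psi> x) has_real_derivative gp x * \<psi> x + G x * deriv \<psi> x) (at x)"
          using DERIV_mult[OF G_deriv dpsi] by (simp add: algebra_simps)
        then show "((\<lambda>x. G x * \<psi> x) has_vector_derivative gp x * \<psi> x + G x * deriv \<psi> x) (at x within {-R..R})"
          by (simp add: has_real_derivative_iff_has_vector_derivative[symmetric] has_field_derivative_at_within)
      qed
      then show ?thesis unfolding K_def by (rule integral_unique)
    qed
    also have "\<dots> = 0" using z[of R] z[of "-R"] R by simp
    finally show ?thesis .
  qed
  have "(LINT x:K|lborel. H x * deriv \<psi> x)
      = (LINT x:K|lborel. V x * deriv \<psi> x - P0 x * deriv \<psi> x + G x * deriv \<psi> x)"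
    by (simp add: H_def algebra_simps)
  also have "\<dots> = (LINT x:K|lborel. V x * deriv \<psi> x) - (LINT x:K|lborel. P0 x * deriv \<psi> x) + (LINT x:K|lborel. G x * deriv \<psi> x)"
    using i1 i2 i4 by (simp add: set_integral_add set_integral_diff set_integral_diff(1)[OF i1 i2] set_integral_add(1)[OF set_integral_diff(1)[OF i1 i2] i4])
  also have "\<dots> = 0" using w1 ibp by simp
  finally show ?thesis unfolding K_def .
qed

end


lemma ae_zero_intervals:
  fixes h :: "real \<Rightarrow> real"
  assumes int: "\<And>a b. set_integrable lborel {a<..b} h"
    and z: "\<And>a b. a < b \<Longrightarrow> (LINT x:{a<..b}|lborel. h x) = 0"
  shows "AE x in lborel. h x = 0"
proof -
  have n0: "AE x in lborel. indicator {-real n<..real n} x * h x = 0" for n :: nat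
  proof -
    define A where "A = {-real n<..real n}"
    define hn where "hn x = indicator A x * h x" for x
    have hi: "integrable lborel hn"
      using int[of "-real n" "real n"] unfolding set_integrable_def hn_def A_def by simp
    have hm[measurable]: "hn \<in> borel_measurable lborel" using hi by (rule borel_measurable_integrable)
    define p where "p x = max 0 (hn x)" for x
    define q where "q x = max 0 (- hn x)" for x
    have pi: "integrable lborel p" unfolding p_def[abs_def] using hi by auto
    have qi: "integrable lborel q" unfolding q_def[abs_def] using hi by auto
    have pm[measurable]: "p \<in> borel_measurable lborel" using pi by (rule borel_measurable_integrable)
    have qm[measurable]: "q \<in> borel_measurable lborel" using qi by (rule borel_measurable_integrable)
    have key: "(LINT y|lborel. hn y * indicator {x<..} y) = 0" for x
    proof -
      have eq: "hn y * indicator {x<..} y = indicator {max x (-real n)<..real n} y *\<^sub>R h y" for y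
        by (auto simp: hn_def A_def indicator_def)
      show ?thesis
      proof (cases "max x (-real n) < real n")
        case True
        then show ?thesis unfolding eq using z[OF True] by (simp add: set_lebesgue_integral_def)
      next
        case False
        then have e: "{max x (-real n)<..real n} = {}" by auto
        show ?thesis unfolding eq e by simp
      qed
    qed
    have pq: "(LINT y|lborel. p y * indicator {x<..} y) = (LINT y|lborel. q y * indicator {x<..} y)" for x
    proof -
      have "(LINT y|lborel. p y * indicator {x<..} y) - (LINT y|lborel. q y * indicator {x<..} y)
          = (LINT y|lborel. p y * indicator {x<..} y - q y * indicator {x<..} y)"
        by (intro Bochner_Integration.integral_diff[symmetric] integrable_real_mult_indicator pi qi) auto
      also have "\<dots> = (LINT y|lborel. hn y * indicator {x<..} y)"
        by (intro Bochner_Integration.integral_cong) (auto simp: p_def q_def max_def algebra_simps)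
      finally show ?thesis using key[of x] by simp
    qed
    have em: "emeasure (density lborel (\<lambda>x. ennreal (r x))) {x<..} = ennreal (LINT y|lborel. r y * indicator {x<..} y)"
      if ri: "integrable lborel r" and rn: "\<And>y. r y \<ge> 0" for r :: "real \<Rightarrow> real" and x
    proof -
      have [measurable]: "r \<in> borel_measurable lborel" using ri by (rule borel_measurable_integrable)
      have "emeasure (density lborel (\<lambda>x. ennreal (r x))) {x<..} = (\<integral>\<^sup>+ y. ennreal (r y) * indicator {x<..} y \<partial>lborel)"
        by (rule emeasure_density) auto
      also have "\<dots> = (\<integral>\<^sup>+ y. ennreal (r y * indicator {x<..} y) \<partial>lborel)"
        by (intro nn_integral_cong) (auto split: split_indicator)
      also have "\<dots> = ennreal (LINT y|lborel. r y * indicator {x<..} y)"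
        by (intro nn_integral_eq_integral integrable_real_mult_indicator ri) (auto simp: rn)
      finally show ?thesis .
    qed
    have pn: "p y \<ge> 0" and qn: "q y \<ge> 0" for y by (auto simp: p_def q_def)
    have "density lborel (\<lambda>x. ennreal (p x)) = density lborel (\<lambda>x. ennreal (q x))"
    proof (rule measure_eqI_lessThan)
      show "sets (density lborel (\<lambda>x. ennreal (p x))) = sets borel" by simp
      show "sets (density lborel (\<lambda>x. ennreal (q x))) = sets borel" by simp
      fix x
      show "emeasure (density lborel (\<lambda>x. ennreal (p x))) {x<..} < \<infinity>"
        using em[OF pi pn] by simp
      show "emeasure (density lborel (\<lambda>x. ennreal (p x))) {x<..} = emeasure (density lborel (\<lambda>x. ennreal (q x))) {x<..}"
        using em[OF pi pn] em[OF qi qn] pq by simp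
    qed
    then have "AE x in lborel. ennreal (p x) = ennreal (q x)"
      by (intro sigma_finite_measure.density_unique[OF sigma_finite_lborel]) auto
    then have "AE x in lborel. hn x = 0"
    proof (rule AE_mp, intro AE_I2 impI)
      fix x assume "ennreal (p x) = ennreal (q x)"
      then have "p x = q x" using pn qn by (simp add: ennreal_inj)
      then show "hn x = 0" by (auto simp: p_def q_def max_def split: if_splits)
    qed
    then show ?thesis unfolding hn_def A_def .
  qed
  then have "AE x in lborel. \<forall>n::nat. indicator {-real n<..real n} x * h x = 0"
    by (subst AE_all_countable) auto
  then show ?thesis
  proof (rule AE_mp, intro AE_I2 impI)
    fix x assume a: "\<forall>n::nat. indicator {-real n<..real n} x * h x = 0"
    obtain n :: nat where "\<bar>x\<bar> < real n" using reals_Archimedean2 by blast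
    then have "x \<in> {-real n<..real n}" by auto
    then show "h x = 0" using a[rule_format, of n] by simp
  qed
qed


context wsetting
begin

lemma H_measurable: "(\<lambda>x. indicator K x *\<^sub>R H x) \<in> borel_measurable lborel" if "K = {a..b}" for K a b
  using Hint[of a b] that unfolding set_integrable_def by (intro borel_measurable_integrable) simp

lemma Hint_Ioc: "set_integrable lborel {a<..b} H"
  by (rule set_integrable_subset[OF Hint[of a b]]) auto

lemma interval_id:
  assumes L: "L > 0"
  shows "(LINT x:{s<..s+L}|lborel. H x) = L * (LINT x:{0<..1}|lborel. H x)"
proof -
  define R where "R = tR 1 s L"
  define K where "K = {-R..R}"
  define e where "e n = 1 / (real n + 1)" for n :: nat
  have e_pos: "e n > 0" and e_le: "e n \<le> 1" for n by (auto simp: e_def field_simps)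
  have R0: "0 \<le> R" by (simp add: R_def tR_def)
  have zn: "(LINT x:K|lborel. H x * dtf (e n) s L x) = 0" for n
  proof -
    have "(LINT x:{-R..R}|lborel. H x * deriv (tf (e n) s L) x) = 0"
    proof (rule weak_H[OF smooth_tf _ R0])
      fix x assume "R \<le> \<bar>x\<bar>"
      moreover have "tR (e n) s L \<le> R" using e_le[of n] by (simp add: R_def tR_def)
      ultimately show "tf (e n) s L x = 0" by (intro tf_zero e_pos) simp
    qed
    then show ?thesis unfolding deriv_tf[OF e_pos] K_def .
  qed
  define T where "T x = (if x > s then 1 else 0) - (if x > s + L then 1 else 0) - L * (if x > 0 then 1 else (0::real)) + L * (if x > 1 then 1 else 0)" for x
  have hK: "integrable lborel (\<lambda>x. indicator K x *\<^sub>R H x)"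
    using Hint[of "-R" R] unfolding set_integrable_def K_def .
  have hKm[measurable]: "(\<lambda>x. indicator K x *\<^sub>R H x) \<in> borel_measurable borel"
    using borel_measurable_integrable[OF hK] by simp
  have dtfc: "continuous_on UNIV (dtf (e n) s L)" for n
    using smooth_deriv_cont[OF smooth_tf] deriv_tf[OF e_pos] by metis
  have dtfm[measurable]: "dtf (e n) s L \<in> borel_measurable borel" for n
    by (rule borel_measurable_continuous_onI[OF dtfc])
  have Tm[measurable]: "T \<in> borel_measurable borel" unfolding T_def[abs_def] by measurable
  have lim: "(\<lambda>n. LINT x|lborel. (indicator K x *\<^sub>R H x) * dtf (e n) s L x) \<longlonglongrightarrow> (LINT x|lborel. (indicator K x *\<^sub>R H x) * T x)"
  proof (rule integral_dominated_convergence[where w="\<lambda>x. norm (indicator K x *\<^sub>R H x) * (2 + 2 * \<bar>L\<bar>)"])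
    show "(\<lambda>x. (indicator K x *\<^sub>R H x) * T x) \<in> borel_measurable lborel"
      by (intro borel_measurable_times) (use hKm Tm in simp_all)
    show "(\<lambda>x. (indicator K x *\<^sub>R H x) * dtf (e n) s L x) \<in> borel_measurable lborel" for n
      by (intro borel_measurable_times) (use hKm dtfm in simp_all)
    show "integrable lborel (\<lambda>x. norm (indicator K x *\<^sub>R H x) * (2 + 2 * \<bar>L\<bar>))"
      using hK by (intro integrable_mult_left integrable_norm)
    show "AE x in lborel. (\<lambda>n. (indicator K x *\<^sub>R H x) * dtf (e n) s L x) \<longlonglongrightarrow> (indicator K x *\<^sub>R H x) * T x"
      unfolding e_def T_def by (intro AE_I2 tendsto_mult tendsto_const dtf_lim)
    show "AE x in lborel. norm ((indicator K x *\<^sub>R H x) * dtf (e n) s L x) \<le> norm (indicator K x *\<^sub>R H x) * (2 + 2 * \<bar>L\<bar>)" for n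
      by (intro AE_I2) (auto simp: abs_mult intro!: mult_left_mono dtf_bound)
  qed
  moreover have "(LINT x|lborel. (indicator K x *\<^sub>R H x) * dtf (e n) s L x) = 0" for n
    using zn[of n] by (simp add: set_lebesgue_integral_def mult.assoc)
  ultimately have "(\<lambda>n. 0) \<longlonglongrightarrow> (LINT x|lborel. (indicator K x *\<^sub>R H x) * T x)"
    by simp
  then have l0: "(LINT x|lborel. (indicator K x *\<^sub>R H x) * T x) = 0"
    using LIMSEQ_unique[OF tendsto_const] by metis
  have sub1: "{s<..s+L} \<subseteq> K" and sub2: "{0<..1} \<subseteq> K"
    by (auto simp: K_def R_def tR_def)
  have pw: "(indicator K x *\<^sub>R H x) * T x = indicator {s<..s+L} x *\<^sub>R H x - L * (indicator {0<..1} x *\<^sub>R H x)" for x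
  proof (cases "x \<in> K")
    case True
    then show ?thesis using L by (auto simp: T_def indicator_def algebra_simps)
  next
    case False
    then have "x \<notin> {s<..s+L}" "x \<notin> {0<..1}" using sub1 sub2 by auto
    then show ?thesis using False by simp
  qed
  have i1: "integrable lborel (\<lambda>x. indicator {s<..s+L} x *\<^sub>R H x)"
    using Hint_Ioc unfolding set_integrable_def .
  have i2: "integrable lborel (\<lambda>x. indicator {0<..1} x *\<^sub>R H x)"
    using Hint_Ioc unfolding set_integrable_def .
  have "0 = (LINT x|lborel. indicator {s<..s+L} x *\<^sub>R H x - L * (indicator {0<..1} x *\<^sub>R H x))"
    using l0 unfolding pw by simp
  also have "\<dots> = (LINT x|lborel. indicator {s<..s+L} x *\<^sub>R H x) - L * (LINT x|lborel. indicator {0<..1} x *\<^sub>R H x)"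
    using i1 i2 by (simp add: Bochner_Integration.integral_diff integrable_mult_right)
  finally show ?thesis by (simp add: set_lebesgue_integral_def)
qed

definition kp where "kp = (LINT x:{0<..1}|lborel. H x)"

lemma H_const_ae: "AE x in lborel. H x - kp = 0"
proof (rule ae_zero_intervals)
  fix a b :: real
  have c: "set_integrable lborel {a<..b} (\<lambda>x. kp)"
    by (rule set_integrable_subset[OF cont_set_integrable[of "\<lambda>x. kp" a b]]) auto
  show "set_integrable lborel {a<..b} (\<lambda>x. H x - kp)"
    by (intro set_integral_diff Hint_Ioc c)
  assume ab: "a < b"
  have "(LINT x:{a<..b}|lborel. H x - kp) = (LINT x:{a<..b}|lborel. H x) - (LINT x:{a<..b}|lborel. kp)"
    by (intro set_integral_diff Hint_Ioc c)
  also have "(LINT x:{a<..b}|lborel. H x) = (b - a) * kp"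
    using interval_id[of "b - a" a] ab by (simp add: kp_def)
  also have "(LINT x:{a<..b}|lborel. kp) = (b - a) * kp"
    using ab by (subst set_integral_const) auto
  finally show "(LINT x:{a<..b}|lborel. H x - kp) = 0" by simp
qed

definition W where "W x = P0 x - G x + kp"

lemma W_cont: "continuous_on UNIV W"
  unfolding W_def[abs_def] by (intro continuous_intros P0_cont G_cont)

lemma W_ae: "AE x in lborel. W x = V x"
  using H_const_ae by (rule AE_mp) (auto simp: W_def H_def)

end


locale wfront = wsetting +
  fixes \<alpha> \<gamma> :: real
  assumes al: "0 < \<alpha>" "\<alpha> < 1" "0 < \<gamma>" "\<gamma> < 1"
    and Dpos: "\<forall>u\<in>{0<..<\<alpha>}. D u > 0" and Dneg: "\<forall>u\<in>{\<alpha><..<1}. D u < 0"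
    and gneg: "\<forall>u\<in>{0<..<\<gamma>}. g u < 0" and gpos: "\<forall>u\<in>{\<gamma><..<1}. g u > 0"
    and anti: "antimono \<phi>"
    and lim1: "(\<phi> \<longlongrightarrow> 1) at_bot" and lim0: "(\<phi> \<longlongrightarrow> 0) at_top"
    and adiff: "AE \<xi> in lborel. \<phi> differentiable (at \<xi>)"
begin

lemma anti_le: "x \<le> y \<Longrightarrow> \<phi> y \<le> \<phi> x"
  using anti unfolding antimono_def by blast

lemma deriv_nonpos:
  assumes d: "\<phi> differentiable (at x)"
  shows "deriv \<phi> x \<le> 0"
proof (rule ccontr)
  assume n: "\<not> deriv \<phi> x \<le> 0"
  have "DERIV \<phi> x :> deriv \<phi> x" using d DERIV_deriv_iff_real_differentiable by blast
  from DERIV_pos_inc_right[OF this] n obtain d where "d > 0" "\<forall>h>0. h < d \<longrightarrow> \<phi> x < \<phi> (x + h)"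
    by auto
  then have "\<phi> x < \<phi> (x + d / 2)" by auto
  moreover have "\<phi> (x + d / 2) \<le> \<phi> x" using \<open>d > 0\<close> by (intro anti_le) simp
  ultimately show False by simp
qed

lemma Dbound: obtains Dm where "Dm > 0" "\<And>u. u \<in> {0..1} \<Longrightarrow> \<bar>D u\<bar> \<le> Dm"
proof -
  obtain B where B: "\<forall>y\<in>D ` {0..1}. norm y \<le> B"
    using compact_imp_bounded[OF compact_continuous_image[OF Dc compact_Icc]] unfolding bounded_iff by blast
  show ?thesis
  proof (rule that[of "max B 1"])
    show "max B 1 > 0" by simp
    fix u :: real assume "u \<in> {0..1}"
    then have "\<bar>D u\<bar> \<le> B" using B by auto
    then show "\<bar>D u\<bar> \<le> max B 1" by linarith
  qed
qed

lemma key: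
  obtains Dm where "Dm > 0"
    "\<And>a b e. a \<le> b \<Longrightarrow> e > 0 \<Longrightarrow> (\<forall>x\<in>{a..b}. e \<le> \<bar>W x\<bar>) \<Longrightarrow> e * (b - a) \<le> Dm"
proof -
  obtain Dm where Dm: "Dm > 0" "\<And>u. u \<in> {0..1} \<Longrightarrow> \<bar>D u\<bar> \<le> Dm" using Dbound by blast
  have "e * (b - a) \<le> Dm" if ab: "a \<le> b" and e: "e > 0" and Wb: "\<forall>x\<in>{a..b}. e \<le> \<bar>W x\<bar>" for a b e
  proof -
    have "AE x in lborel. \<phi> differentiable (at x) \<and> W x = V x"
      using adiff W_ae by eventually_elim auto
    then obtain N where N0: "{x \<in> space lborel. \<not> (\<phi> differentiable (at x) \<and> W x = V x)} \<subseteq> N" "N \<in> null_sets lborel"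
      by (rule AE_E) (metis null_setsI)
    then have N: "{x. \<not> (\<phi> differentiable (at x) \<and> W x = V x)} \<subseteq> N" "N \<in> null_sets lborel" by auto
    define S where "S = {x\<in>{a..b}. \<phi> differentiable (at x) \<and> W x = V x}"
    have "{a..b} - S \<subseteq> N" using N(1) by (auto simp: S_def)
    then have nS: "{a..b} - S \<in> null_sets lebesgue"
      by (rule null_sets_completion_subset[OF _ null_sets_completionI[OF N(2)]])
    have Seq: "S = {a..b} - ({a..b} - S)" by (auto simp: S_def)
    have Iab: "{a..b} \<in> sets lebesgue" by (metis box_real(2) fmeasurableD lmeasurable_cbox)
    have "{a..b} - ({a..b} - S) \<in> sets lebesgue"
      by (intro sets.Diff Iab null_setsD2[OF nS])
    then have Sleb: "S \<in> sets lebesgue" using Seq by metis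
    have Slm: "S \<in> lmeasurable"
      by (rule bounded_set_imp_lmeasurable[OF bounded_subset[OF bounded_closed_interval] Sleb]) (auto simp: S_def)
    have mS: "measure lebesgue S = b - a"
    proof -
      have "measure lebesgue S = measure lebesgue {a..b}"
        by (subst Seq, rule measure_Diff_null_set) (auto intro: nS)
      also have "\<dots> = integral {a..b} (\<lambda>x. 1::real)" by (rule lmeasure_integral) simp
      also have "\<dots> = b - a" using ab by simp
      finally show ?thesis .
    qed
    have der: "(\<phi> has_field_derivative deriv \<phi> x) (at x within S)" if "x \<in> S" for x
    proof -
      have "\<phi> differentiable (at x)" using that by (simp add: S_def)
      then have "(\<phi> has_field_derivative deriv \<phi> x) (at x)" using DERIV_deriv_iff_real_differentiable by blast
      then show ?thesis by (rule has_field_derivative_at_within)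
    qed
    have dlow: "e / Dm \<le> \<bar>deriv \<phi> x\<bar>" if "x \<in> S" for x
    proof -
      have "x \<in> {a..b}" "W x = V x" using that by (auto simp: S_def)
      then have "e \<le> \<bar>V x\<bar>" using Wb by metis
      also have "\<dots> = \<bar>D (\<phi> x)\<bar> * \<bar>deriv \<phi> x\<bar>" by (simp add: V_def abs_mult)
      also have "\<dots> \<le> Dm * \<bar>deriv \<phi> x\<bar>" using Dm(2)[OF phir] by (intro mult_right_mono) auto
      finally show ?thesis using Dm(1) by (simp add: divide_le_eq mult.commute)
    qed
    have dneg: "deriv \<phi> x < 0" if "x \<in> S" for x
    proof -
      have "deriv \<phi> x \<le> 0" using that deriv_nonpos by (auto simp: S_def)
      moreover have "e / Dm > 0" using e Dm(1) by simp
      then have "deriv \<phi> x \<noteq> 0" using dlow[OF that] by auto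
      ultimately show ?thesis by simp
    qed
    have inj: "inj_on \<phi> S"
    proof (rule inj_onI, rule ccontr)
      fix x y assume x: "x \<in> S" and y: "y \<in> S" and eq: "\<phi> x = \<phi> y" and ne: "x \<noteq> y"
      have "\<exists>u v. u \<in> S \<and> u < v \<and> \<phi> u = \<phi> v"
        using x y eq ne by (metis linorder_neqE_linordered_idom)
      then obtain u v where u: "u \<in> S" "u < v" "\<phi> u = \<phi> v" by blast
      have "DERIV \<phi> u :> deriv \<phi> u" using u(1) DERIV_deriv_iff_real_differentiable by (auto simp: S_def)
      from DERIV_neg_dec_right[OF this dneg[OF u(1)]] obtain d where d: "d > 0" "\<forall>h>0. h < d \<longrightarrow> \<phi> (u + h) < \<phi> u"
        by auto
      define h where "h = min (d / 2) (v - u)"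
      have h: "h > 0" "h < d" "u + h \<le> v" using d u by (auto simp: h_def)
      have "\<phi> (u + h) < \<phi> u" using d h by auto
      moreover have "\<phi> v \<le> \<phi> (u + h)" using h by (intro anti_le) simp
      ultimately show False using u by simp
    qed
    have imS: "\<phi> ` S \<in> sets lebesgue"
      by (rule differentiable_image_in_sets_lebesgue[OF Sleb])
        (auto simp: S_def intro!: differentiable_at_imp_differentiable_on)
    have imL: "\<phi> ` S \<in> lmeasurable"
      by (rule bounded_set_imp_lmeasurable[OF bounded_subset[OF bounded_closed_interval[of 0 1]] imS]) (use phir in auto)
    have cov: "(\<lambda>x. \<bar>deriv \<phi> x\<bar> * 1) absolutely_integrable_on S \<and>
        integral S (\<lambda>x. \<bar>deriv \<phi> x\<bar> * 1) = integral (\<phi> ` S) (\<lambda>x. 1)"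
      using has_absolute_integral_change_of_variables_1'[OF Sleb der inj, of "\<lambda>x. 1" "integral (\<phi> ` S) (\<lambda>x. 1)"]
      using absolutely_integrable_on_const[OF imL] by simp
    have "integral (\<phi> ` S) (\<lambda>x. 1::real) = measure lebesgue (\<phi> ` S)"
      by (rule lmeasure_integral[OF imL, symmetric])
    also have "\<dots> \<le> measure lebesgue {0..1::real}"
      by (rule measure_mono_fmeasurable) (use phir imS in auto)
    also have "\<dots> = 1"
      by (subst lmeasure_integral) auto
    finally have up: "integral S (\<lambda>x. \<bar>deriv \<phi> x\<bar> * 1) \<le> 1" using cov by simp
    have le1: "integral S (\<lambda>x. e / Dm) \<le> integral S (\<lambda>x. \<bar>deriv \<phi> x\<bar> * 1)"
      using cov dlow by (intro integral_le integrable_on_const[OF Slm]) (auto simp: absolutely_integrable_on_def)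
    have eq1: "integral S (\<lambda>x. e / Dm) = e / Dm * (b - a)"
    proof -
      have "integral S (\<lambda>x. e / Dm) = integral S (\<lambda>x. (e / Dm) *\<^sub>R 1)" by simp
      also have "\<dots> = (e / Dm) * integral S (\<lambda>x. 1)" by (subst integral_cmul) simp
      also have "\<dots> = e / Dm * (b - a)" using lmeasure_integral[OF Slm] mS by simp
      finally show ?thesis .
    qed
    have "e / Dm * (b - a) \<le> 1" using le1 eq1 up by linarith
    then show ?thesis using Dm(1) by (simp add: field_simps)
  qed
  then show ?thesis using that Dm(1) by blast
qed

end


context wfront
begin

lemma W_isCont: "isCont W x"
  using W_cont continuous_on_eq_continuous_at open_UNIV by blast

lemma W_prop_open:
  assumes U: "open U" and C: "closed C"
    and h: "\<And>x. x \<in> U \<Longrightarrow> \<phi> differentiable (at x) \<Longrightarrow> V x \<in> C"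
    and x: "x \<in> U"
  shows "W x \<in> C"
proof -
  have "AE x in lborel. x \<in> U \<longrightarrow> W x \<in> C"
    using adiff W_ae by eventually_elim (use h in auto)
  then have "AE x in lebesgue. x \<in> U \<longrightarrow> x \<in> W -` C"
    by (intro AE_completion) auto
  moreover have "closed (W -` C)"
    using C W_isCont by (intro continuous_closed_vimage) auto
  ultimately have "x \<in> W -` C"
    by (intro mem_closed_if_AE_lebesgue_open[OF U _ _ x]) auto
  then show ?thesis by simp
qed

lemma deriv_const_open:
  assumes "open U" "x \<in> U" "\<And>y. y \<in> U \<Longrightarrow> \<phi> y = k"
  shows "deriv \<phi> x = 0"
proof -
  have "(\<phi> has_real_derivative 0) (at x)"
    by (rule has_field_derivative_transform_within_open[OF DERIV_const assms(1,2)]) (use assms(3) in auto)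
  then show ?thesis by (rule DERIV_imp_deriv)
qed

lemma W_left:
  assumes bdd: "bdd_below {\<xi>. \<phi> \<xi> < 1}"
  shows "(W \<longlongrightarrow> 0) (at_right (Inf {\<xi>. \<phi> \<xi> < 1}))"
proof -
  define x1 where "x1 = Inf {\<xi>. \<phi> \<xi> < 1}"
  have p1: "\<phi> x = 1" if "x < x1" for x
  proof (rule ccontr)
    assume "\<phi> x \<noteq> 1"
    then have "\<phi> x < 1" using phir[of x] by auto
    then have "x1 \<le> x" unfolding x1_def using bdd by (intro cInf_lower) auto
    then show False using that by simp
  qed
  have Wz: "W x = 0" if "x < x1" for x
  proof -
    have "W x \<in> {0}"
    proof (rule W_prop_open[of "{..<x1}"])
      fix y assume "y \<in> {..<x1}"
      then have "deriv \<phi> y = 0" by (intro deriv_const_open[of "{..<x1}" _ 1]) (auto intro: p1)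
      then show "V y \<in> {0}" by (simp add: V_def)
    qed (use that in auto)
    then show ?thesis by simp
  qed
  have l1: "(W \<longlongrightarrow> W x1) (at_left x1)"
    using W_isCont[of x1] by (simp add: isCont_def filterlim_at_split)
  have l2: "(W \<longlongrightarrow> 0) (at_left x1)"
    by (rule tendsto_eventually) (auto simp: eventually_at_left_field Wz intro!: exI[of _ "x1 - 1"])
  have "W x1 = 0" using tendsto_unique[OF _ l1 l2] by simp
  then have "(W \<longlongrightarrow> 0) (at x1)" using W_isCont[of x1] by (simp add: isCont_def)
  then show ?thesis unfolding x1_def[symmetric] by (simp add: filterlim_at_split)
qed

lemma W_right:
  assumes bdd: "bdd_above {\<xi>. \<phi> \<xi> > 0}"
  shows "(W \<longlongrightarrow> 0) (at_left (Sup {\<xi>. \<phi> \<xi> > 0}))"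
proof -
  define x0 where "x0 = Sup {\<xi>. \<phi> \<xi> > 0}"
  have p0: "\<phi> x = 0" if "x > x0" for x
  proof (rule ccontr)
    assume "\<phi> x \<noteq> 0"
    then have "\<phi> x > 0" using phir[of x] by auto
    then have "x \<le> x0" unfolding x0_def using bdd by (intro cSup_upper) auto
    then show False using that by simp
  qed
  have Wz: "W x = 0" if "x > x0" for x
  proof -
    have "W x \<in> {0}"
    proof (rule W_prop_open[of "{x0<..}"])
      fix y assume "y \<in> {x0<..}"
      then have "deriv \<phi> y = 0" by (intro deriv_const_open[of "{x0<..}" _ 0]) (auto intro: p0)
      then show "V y \<in> {0}" by (simp add: V_def)
    qed (use that in auto)
    then show ?thesis by simp
  qed
  have l1: "(W \<longlongrightarrow> W x0) (at_right x0)"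
    using W_isCont[of x0] by (simp add: isCont_def filterlim_at_split)
  have l2: "(W \<longlongrightarrow> 0) (at_right x0)"
    by (rule tendsto_eventually) (auto simp: eventually_at_right_field Wz intro!: exI[of _ "x0 + 1"])
  have "W x0 = 0" using tendsto_unique[OF _ l1 l2] by simp
  then have "(W \<longlongrightarrow> 0) (at x0)" using W_isCont[of x0] by (simp add: isCont_def)
  then show ?thesis unfolding x0_def[symmetric] by (simp add: filterlim_at_split)
qed

lemma G_mono_int:
  assumes "a \<le> b" "\<And>x. x \<in> {a..b} \<Longrightarrow> gp x \<ge> 0"
  shows "G a \<le> G b"
proof -
  have "(gp has_integral (G b - G a)) {a..b}"
    unfolding G_def by (rule prim_has_integral[OF gp_cont assms(1)])
  then have "0 \<le> G b - G a" by (rule has_integral_nonneg) (use assms(2) in auto)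
  then show ?thesis by simp
qed

lemma G_anti_int:
  assumes "a \<le> b" "\<And>x. x \<in> {a..b} \<Longrightarrow> gp x \<le> 0"
  shows "G b \<le> G a"
proof -
  have "(gp has_integral (G b - G a)) {a..b}"
    unfolding G_def by (rule prim_has_integral[OF gp_cont assms(1)])
  then have "((\<lambda>x. - gp x) has_integral - (G b - G a)) {a..b}" by (rule has_integral_neg)
  then have "0 \<le> - (G b - G a)" by (rule has_integral_nonneg) (use assms(2) in auto)
  then show ?thesis by simp
qed

lemma W_diff: "W a - W b = (P0 a - P0 b) - (G a - G b)"
  by (simp add: W_def)

lemma W_bot:
  assumes nb: "\<not> bdd_below {\<xi>. \<phi> \<xi> < 1}"
  shows "(W \<longlongrightarrow> 0) at_bot"
proof -
  have plt: "\<phi> x < 1" for x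
  proof -
    obtain y where "y \<in> {\<xi>. \<phi> \<xi> < 1}" "\<not> x \<le> y" using nb unfolding bdd_below_def by blast
    then have "\<phi> y < 1" "y \<le> x" by auto
    then show ?thesis using anti_le[of y x] by simp
  qed
  have "max \<alpha> \<gamma> < 1" using al by simp
  from order_tendstoD(1)[OF lim1 this] obtain M0 where M0: "\<And>x. x \<le> M0 \<Longrightarrow> max \<alpha> \<gamma> < \<phi> x"
    unfolding eventually_at_bot_linorder by blast
  have Wnn: "0 \<le> W x" if "x < M0" for x
  proof -
    have "W x \<in> {0..}"
    proof (rule W_prop_open[of "{..<M0}"])
      fix y assume y: "y \<in> {..<M0}" and d: "\<phi> differentiable (at y)"
      have "\<phi> y \<in> {\<alpha><..<1}" using M0[of y] y plt[of y] by auto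
      then have "D (\<phi> y) < 0" using Dneg by auto
      moreover have "deriv \<phi> y \<le> 0" by (rule deriv_nonpos[OF d])
      ultimately show "V y \<in> {0..}" by (simp add: V_def mult_nonpos_nonpos)
    qed (use that in auto)
    then show ?thesis by simp
  qed
  have gpp: "gp x \<ge> 0" if "x \<le> M0" for x
  proof -
    have "\<phi> x \<in> {\<gamma><..<1}" using M0[of x] that plt[of x] by auto
    then show ?thesis using gpos by (auto simp: gp_def intro: less_imp_le)
  qed
  have Pl: "(P0 \<longlongrightarrow> f 1 - c) at_bot"
  proof -
    have "((\<lambda>x. f (\<phi> x)) \<longlongrightarrow> f 1) at_bot"
      by (rule continuous_on_tendsto_compose[OF fc lim1]) (use phir in auto)
    from tendsto_diff[OF this tendsto_mult[OF tendsto_const lim1, of c]]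
    show ?thesis unfolding P0_def[abs_def] by simp
  qed
  obtain Dm where Dm: "Dm > 0"
    "\<And>a b e. a \<le> b \<Longrightarrow> e > 0 \<Longrightarrow> (\<forall>x\<in>{a..b}. e \<le> \<bar>W x\<bar>) \<Longrightarrow> e * (b - a) \<le> Dm"
    using key by blast
  show ?thesis
  proof (rule tendstoI)
    fix e :: real assume e: "e > 0"
    define e' where "e' = e / 3"
    have e': "e' > 0" using e by (simp add: e'_def)
    from tendstoD[OF Pl e'] obtain M1 where M1: "\<And>x. x \<le> M1 \<Longrightarrow> dist (P0 x) (f 1 - c) < e'"
      unfolding eventually_at_bot_linorder by blast
    define N1 where "N1 = min M0 M1 - 1"
    have "W b < 3 * e'" if b: "b \<le> N1" for b
    proof (rule ccontr)
      assume "\<not> W b < 3 * e'"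
      then have Wb: "W b \<ge> 3 * e'" by simp
      have Wa: "e' \<le> \<bar>W a\<bar>" if a: "a \<le> b" for a
      proof -
        have "G a \<le> G b" using a b by (intro G_mono_int gpp) (auto simp: N1_def)
        moreover have "dist (P0 a) (f 1 - c) < e'" "dist (P0 b) (f 1 - c) < e'"
          using a b by (auto intro!: M1 simp: N1_def)
        ultimately have "W a \<ge> W b - 2 * e'" using W_diff[of a b] by (simp add: dist_real_def abs_less_iff)
        then show ?thesis using Wb by simp
      qed
      have "e' * (b - (b - (Dm / e' + 1))) \<le> Dm"
      proof (rule Dm(2))
        have "0 < Dm / e'" using e' Dm(1) by simp
        then show "b - (Dm / e' + 1) \<le> b" by simp
      qed (use e' Wa in auto)
      moreover have "e' * (b - (b - (Dm / e' + 1))) = Dm + e'" using e' by (simp add: distrib_left)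
      ultimately show False using e' by linarith
    qed
    moreover have "0 \<le> W b" if "b \<le> N1" for b using that by (intro Wnn) (simp add: N1_def)
    ultimately have "\<forall>b\<le>N1. dist (W b) 0 < e" by (auto simp: e'_def dist_real_def)
    then show "eventually (\<lambda>x. dist (W x) 0 < e) at_bot"
      unfolding eventually_at_bot_linorder by blast
  qed
qed

lemma W_top:
  assumes nb: "\<not> bdd_above {\<xi>. \<phi> \<xi> > 0}"
  shows "(W \<longlongrightarrow> 0) at_top"
proof -
  have pgt: "\<phi> x > 0" for x
  proof -
    obtain y where "y \<in> {\<xi>. \<phi> \<xi> > 0}" "\<not> y \<le> x" using nb unfolding bdd_above_def by blast
    then have "\<phi> y > 0" "x \<le> y" by auto
    then show ?thesis using anti_le[of x y] by simp
  qed
  have "0 < min \<alpha> \<gamma>" using al by simp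
  from order_tendstoD(2)[OF lim0 this] obtain M0 where M0: "\<And>x. x \<ge> M0 \<Longrightarrow> \<phi> x < min \<alpha> \<gamma>"
    unfolding eventually_at_top_linorder by blast
  have Wnp: "W x \<le> 0" if "x > M0" for x
  proof -
    have "W x \<in> {..0}"
    proof (rule W_prop_open[of "{M0<..}"])
      fix y assume y: "y \<in> {M0<..}" and d: "\<phi> differentiable (at y)"
      have "\<phi> y \<in> {0<..<\<alpha>}" using M0[of y] y pgt[of y] by auto
      then have "D (\<phi> y) > 0" using Dpos by auto
      moreover have "deriv \<phi> y \<le> 0" by (rule deriv_nonpos[OF d])
      ultimately show "V y \<in> {..0}" by (simp add: V_def mult_nonneg_nonpos)
    qed (use that in auto)
    then show ?thesis by simp
  qed
  have gpn: "gp x \<le> 0" if "x \<ge> M0" for x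
  proof -
    have "\<phi> x \<in> {0<..<\<gamma>}" using M0[of x] that pgt[of x] by auto
    then show ?thesis using gneg by (auto simp: gp_def intro: less_imp_le)
  qed
  have Pl: "(P0 \<longlongrightarrow> f 0) at_top"
  proof -
    have "((\<lambda>x. f (\<phi> x)) \<longlongrightarrow> f 0) at_top"
      by (rule continuous_on_tendsto_compose[OF fc lim0]) (use phir in auto)
    from tendsto_diff[OF this tendsto_mult[OF tendsto_const lim0, of c]]
    show ?thesis unfolding P0_def[abs_def] by simp
  qed
  obtain Dm where Dm: "Dm > 0"
    "\<And>a b e. a \<le> b \<Longrightarrow> e > 0 \<Longrightarrow> (\<forall>x\<in>{a..b}. e \<le> \<bar>W x\<bar>) \<Longrightarrow> e * (b - a) \<le> Dm"
    using key by blast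
  show ?thesis
  proof (rule tendstoI)
    fix e :: real assume e: "e > 0"
    define e' where "e' = e / 3"
    have e': "e' > 0" using e by (simp add: e'_def)
    from tendstoD[OF Pl e'] obtain M1 where M1: "\<And>x. x \<ge> M1 \<Longrightarrow> dist (P0 x) (f 0) < e'"
      unfolding eventually_at_top_linorder by blast
    define N1 where "N1 = max M0 M1 + 1"
    define N2 where "N2 = N1 + Dm / e' + 1"
    have "W b > - 3 * e'" if b: "b \<ge> N2" for b
    proof (rule ccontr)
      assume "\<not> W b > - 3 * e'"
      then have Wb: "W b \<le> - 3 * e'" by simp
      have Wa: "e' \<le> \<bar>W a\<bar>" if a: "a \<in> {N1..b}" for a
      proof -
        have "G b \<le> G a" using a by (intro G_anti_int gpn) (auto simp: N1_def)
        moreover have "dist (P0 a) (f 0) < e'" "dist (P0 b) (f 0) < e'"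
          using a by (auto intro!: M1 simp: N1_def)
        ultimately have "W a \<le> W b + 2 * e'" using W_diff[of a b] by (simp add: dist_real_def abs_less_iff)
        then show ?thesis using Wb by simp
      qed
      have "0 < Dm / e'" using e' Dm(1) by simp
      then have Nb: "N1 \<le> b" using b by (simp add: N2_def)
      have "e' * (b - N1) \<le> Dm"
        by (rule Dm(2)[OF Nb e']) (use Wa in auto)
      moreover have "e' * (b - N1) \<ge> e' * (Dm / e' + 1)"
        using b e' by (intro mult_left_mono) (auto simp: N2_def)
      moreover have "e' * (Dm / e' + 1) = Dm + e'" using e' by (simp add: distrib_left)
      ultimately show False using e' by linarith
    qed
    moreover have "W b \<le> 0" if "b \<ge> N2" for b
    proof (rule Wnp)
      have "0 < Dm / e'" using e' Dm(1) by simp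
      then show "M0 < b" using that by (simp add: N2_def N1_def)
    qed
    ultimately have "\<forall>b\<ge>N2. dist (W b) 0 < e"
      by (simp add: e'_def dist_real_def) (metis abs_of_nonpos minus_less_iff)
    then show "eventually (\<lambda>x. dist (W x) 0 < e) at_top"
      unfolding eventually_at_top_linorder by blast
  qed
qed

end


lemma C1_on_cont: "C1_on a b h \<Longrightarrow> continuous_on {a..b} h"
  unfolding C1_on_def continuous_on_eq_continuous_within
  by (auto intro: DERIV_continuous)

theorem lemma3p1:
  fixes \<alpha> \<gamma> c :: real and D f g \<phi> :: "real \<Rightarrow> real"
  assumes "0 < \<alpha>" "\<alpha> < 1" "0 < \<gamma>" "\<gamma> < 1"
    and "C1_on 0 1 f" "f 0 = 0"
    and "C1_on 0 1 D"
    and "\<forall>u\<in>{0<..<\<alpha>}. D u > 0" "\<forall>u\<in>{\<alpha><..<1}. D u < 0"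
    and "continuous_on {0..1} g"
    and "\<forall>u\<in>{0<..<\<gamma>}. g u < 0" "\<forall>u\<in>{\<gamma><..<1}. g u > 0"
    and "g 0 = 0" "g \<gamma> = 0" "g 1 = 0"
    and "wavefront D f g c \<phi>"
  shows "\<exists>W. continuous_on UNIV W \<and>
           (AE \<xi> in lborel. W \<xi> = D (\<phi> \<xi>) * deriv \<phi> \<xi>) \<and>
           (W \<longlongrightarrow> 0) (if bdd_below {\<xi>. \<phi> \<xi> < 1} then at_right (Inf {\<xi>. \<phi> \<xi> < 1}) else at_bot) \<and>
           (W \<longlongrightarrow> 0) (if bdd_above {\<xi>. \<phi> \<xi> > 0} then at_left (Sup {\<xi>. \<phi> \<xi> > 0}) else at_top)"
proof -
  have wf: "traveling_wave D f g c \<phi>" "antimono \<phi>" "(\<phi> \<longlongrightarrow> 1) at_bot" "(\<phi> \<longlongrightarrow> 0) at_top"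
    using assms(16) unfolding wavefront_def by auto
  have ad: "AE \<xi> in lborel. \<phi> differentiable (at \<xi>)"
    using wf(1) unfolding traveling_wave_def by auto
  interpret w: wfront D f g c \<phi> \<alpha> \<gamma>
  proof
    show "continuous_on {0..1} f" by (rule C1_on_cont[OF assms(5)])
    show "continuous_on {0..1} D" by (rule C1_on_cont[OF assms(7)])
  qed (use assms wf ad in auto)
  show ?thesis
  proof (intro exI conjI)
    show "continuous_on UNIV w.W" by (rule w.W_cont)
    show "AE \<xi> in lborel. w.W \<xi> = D (\<phi> \<xi>) * deriv \<phi> \<xi>"
      using w.W_ae by (simp add: w.V_def)
    show "(w.W \<longlongrightarrow> 0) (if bdd_below {\<xi>. \<phi> \<xi> < 1} then at_right (Inf {\<xi>. \<phi> \<xi> < 1}) else at_bot)"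
      using w.W_left w.W_bot by auto
    show "(w.W \<longlongrightarrow> 0) (if bdd_above {\<xi>. \<phi> \<xi> > 0} then at_left (Sup {\<xi>. \<phi> \<xi> > 0}) else at_top)"
      using w.W_right w.W_top by auto
  qed
qed


end
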